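(* Fix $s\in\mathfrak{S}$ and the objects in the context. Let $\widetilde p$ denote the joint distribution of $(\widetilde U^{1:N},\widetilde X^{1:N},\widetilde Y^{1:N},\widetilde Z^{1:N}(s))$ produced by the block construction described in the context, and let $q_{U^{1:N}X^{1:N}Y^{1:N}Z^{1:N}(s)}\triangleq\prod_{i=1}^N q_{UXYZ(s)}$. Then $$\mathbb{D}\big(q_{U^{1:N}X^{1:N}Y^{1:N}Z^{1:N}(s)}\,\big\|\,\widetilde p_{U^{1:N}X^{1:N}Y^{1:N}Z^{1:N}(s)}\big)\leq 2LK\delta_K.$$
   Context: Let $q_{UX}$ be a pmf on $\{0,1\}^2$, and $p_{YZ(s)|X}$ a channel with finite output alphabets; set $q_{UXYZ(s)}=q_{UX}p_{YZ(s)|X}$. Let $K$ be a power of two, $L\in\mathbb{N}$, $N=KL$, $G_K=\begin{bmatrix}1&0\\1&1\end{bmatrix}^{\otimes\log_2 K}$ over $\mathrm{GF}(2)$ (so $G_K^{-1}=G_K$). For $(U^{1:K},X^{1:K})\sim\prod_{i=1}^K q_{UX}$ let $A^{1:K}=U^{1:K}G_K$, $V^{1:K}=X^{1:K}G_K$. Let $\delta_K=2^{-K^\beta}$ with $\beta\in(0,1/2)$, $\mathcal{V}_U=\{i: H(A^i|A^{1:i-1})>1-\delta_K\}$, $\mathcal{V}_{X|U}=\{i: H(V^i|V^{1:i-1}U^{1:K})>1-\delta_K\}$. Construction of one block: there are $L$ mutually independent sub-blocks $l=1,\dots,L$. In each sub-block, $\widetilde A^{1:K}$ is generated as follows: the bits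 $\widetilde A^{1:K}[\mathcal{V}_U]$ are set to a uniformly distributed string (of length $|\mathcal{V}_U|$, independent across sub-blocks and of all other randomness), and for $j\notin\mathcal{V}_U$, in increasing order of $j$, $\widetilde A^j$ is drawn according to $q_{A^j|A^{1:j-1}}(\cdot|\widetilde A^{1:j-1})$; then $\widetilde U^{1:K}=\widetilde A^{1:K}G_K$. Next, $\widetilde V^{1:K}$ is drawn successively: for $j\in\mathcal{V}_{X|U}$, $\widetilde V^j$ is a uniform bit, and for $j\notin\mathcal{V}_{X|U}$, $\widetilde V^j\sim q_{V^j|V^{1:j-1}U^{1:K}}(\cdot|\widetilde V^{1:j-1},\widetilde U^{1:K})$; set $\widetilde X^{1:K}=\widetilde V^{1:K}G_K$, and let $(\widetilde Y^{1:K},\widetilde Z^{1:K}(s))$ be the output of $K$ independent uses of $p_{YZ(s)|X}$ with input $\widetilde X^{1:K}$. The length-$N$ sequences $\widetilde U^{1:N},\widetilde X^{1:N},\widetilde Y^{1:N},\widetilde Z^{1:N}(s)$ are the concatenations over the $L$ sub-blocks. $\mathbb{D}$ denotes Kullback–Leibler divergence. *)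

theory Defs
  imports "HOL-Probability.Probability"
begin

definition coin :: "bool pmf" where
  "coin = bernoulli_pmf (1/2)"

fun seq_pmf :: "'a pmf list \<Rightarrow> 'a list pmf" where
  "seq_pmf [] = return_pmf []"
| "seq_pmf (p # ps) = bind_pmf p (\<lambda>a. map_pmf (\<lambda>as. a # as) (seq_pmf ps))"

fun succ_gen :: "nat \<Rightarrow> (nat \<Rightarrow> bool list \<Rightarrow> bool pmf) \<Rightarrow> bool list pmf" where
  "succ_gen 0 f = return_pmf []"
| "succ_gen (Suc j) f = bind_pmf (succ_gen j f) (\<lambda>w. map_pmf (\<lambda>b. w @ [b]) (f j w))"

text \<open>Entries of the kernel F = [[1,0],[1,1]] (row a, column b, a b in {0,1}).\<close>
definition kern_F :: "nat \<Rightarrow> nat \<Rightarrow> bool" where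
  "kern_F a b = (b \<le> a)"

text \<open>Entries (row i, column j, 0-based) of G_K = F^{\<otimes> n}, K = 2^n, over GF(2)
  (True = 1), via F^{\<otimes>(n+1)} = F \<otimes> F^{\<otimes> n}.\<close>
fun polarG :: "nat \<Rightarrow> nat \<Rightarrow> nat \<Rightarrow> bool" where
  "polarG 0 i j = True"
| "polarG (Suc n) i j =
     (kern_F (i div 2^n) (j div 2^n) \<and> polarG n (i mod 2^n) (j mod 2^n))"

text \<open>Row vector u (length 2^n) times G_K over GF(2).\<close>
definition polar :: "nat \<Rightarrow> bool list \<Rightarrow> bool list" where
  "polar n u = map (\<lambda>j. odd (card {i. i < 2^n \<and> u ! i \<and> polarG n i j})) [0..<2^n]"

definition iid_UX :: "(bool \<times> bool) pmf \<Rightarrow> nat \<Rightarrow> (bool list \<times> bool list) pmf" where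
  "iid_UX q K = map_pmf (\<lambda>ps. (map fst ps, map snd ps)) (seq_pmf (replicate K q))"

definition cond_ent :: "('a \<times> 'b) pmf \<Rightarrow> real" where
  "cond_ent p = - (\<Sum>ab\<in>set_pmf p. pmf p ab * log 2 (pmf p ab / pmf (map_pmf snd p) (snd ab)))"

text \<open>Conditional law of a bit g under p given the event C; convention: a fair
  coin if C has probability zero.\<close>
definition cond_on :: "'c pmf \<Rightarrow> ('c \<Rightarrow> bool) \<Rightarrow> 'c set \<Rightarrow> bool pmf" where
  "cond_on p g C = (if set_pmf p \<inter> C = {} then coin else map_pmf g (cond_pmf p C))"

text \<open>H(A^i | A^{1:i-1}) and H(V^i | V^{1:i-1} U^{1:K}), indices 0-based.\<close>
definition H_A :: "(bool \<times> bool) pmf \<Rightarrow> nat \<Rightarrow> nat \<Rightarrow> real" where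
  "H_A q n i = cond_ent (map_pmf (\<lambda>(u, x). (polar n u ! i, take i (polar n u))) (iid_UX q (2^n)))"

definition H_V :: "(bool \<times> bool) pmf \<Rightarrow> nat \<Rightarrow> nat \<Rightarrow> real" where
  "H_V q n i = cond_ent (map_pmf (\<lambda>(u, x). (polar n x ! i, (take i (polar n x), u))) (iid_UX q (2^n)))"

definition V_U :: "(bool \<times> bool) pmf \<Rightarrow> nat \<Rightarrow> real \<Rightarrow> nat set" where
  "V_U q n \<delta> = {i. i < 2^n \<and> H_A q n i > 1 - \<delta>}"

definition V_XU :: "(bool \<times> bool) pmf \<Rightarrow> nat \<Rightarrow> real \<Rightarrow> nat set" where
  "V_XU q n \<delta> = {i. i < 2^n \<and> H_V q n i > 1 - \<delta>}"

definition subblock :: "(bool \<times> bool) pmf \<Rightarrow> (bool \<Rightarrow> ('y \<times> 'z) pmf) \<Rightarrow> nat \<Rightarrow> real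
    \<Rightarrow> (bool list \<times> bool list \<times> 'y list \<times> 'z list) pmf" where
  "subblock q W n \<delta> =
    bind_pmf
      (succ_gen (2^n) (\<lambda>j w. if j \<in> V_U q n \<delta> then coin
         else cond_on (iid_UX q (2^n)) (\<lambda>(u', x'). polar n u' ! j)
                {(u', x'). take j (polar n u') = w}))
      (\<lambda>a. let u = polar n a in
        bind_pmf
          (succ_gen (2^n) (\<lambda>j w. if j \<in> V_XU q n \<delta> then coin
             else cond_on (iid_UX q (2^n)) (\<lambda>(u', x'). polar n x' ! j)
                    {(u', x'). take j (polar n x') = w \<and> u' = u}))
          (\<lambda>v. let x = polar n v in
             map_pmf (\<lambda>yz. (u, x, map fst yz, map snd yz)) (seq_pmf (map W x))))"

definition block :: "(bool \<times> bool) pmf \<Rightarrow> (bool \<Rightarrow> ('y \<times> 'z) pmf) \<Rightarrow> nat \<Rightarrow> real \<Rightarrow> nat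
    \<Rightarrow> (bool list \<times> bool list \<times> 'y list \<times> 'z list) pmf" where
  "block q W n \<delta> L =
    map_pmf (\<lambda>bs. (concat (map (\<lambda>b. fst b) bs), concat (map (\<lambda>b. fst (snd b)) bs),
                   concat (map (\<lambda>b. fst (snd (snd b))) bs), concat (map (\<lambda>b. snd (snd (snd b))) bs)))
      (seq_pmf (replicate L (subblock q W n \<delta>)))"

definition q_UXYZ :: "(bool \<times> bool) pmf \<Rightarrow> (bool \<Rightarrow> ('y \<times> 'z) pmf) \<Rightarrow> (bool \<times> bool \<times> 'y \<times> 'z) pmf" where
  "q_UXYZ q W = bind_pmf q (\<lambda>(u, x). map_pmf (\<lambda>(y, z). (u, x, y, z)) (W x))"

definition iid_UXYZ :: "(bool \<times> bool) pmf \<Rightarrow> (bool \<Rightarrow> ('y \<times> 'z) pmf) \<Rightarrow> nat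
    \<Rightarrow> (bool list \<times> bool list \<times> 'y list \<times> 'z list) pmf" where
  "iid_UXYZ q W N =
    map_pmf (\<lambda>ts. (map fst ts, map (\<lambda>t. fst (snd t)) ts, map (\<lambda>t. fst (snd (snd t))) ts,
                   map (\<lambda>t. snd (snd (snd t))) ts))
      (seq_pmf (replicate N (q_UXYZ q W)))"

definition KL :: "'a pmf \<Rightarrow> 'a pmf \<Rightarrow> ereal" where
  "KL p r = (if \<exists>x\<in>set_pmf p. pmf r x = 0 then \<infinity>
             else ereal (\<Sum>x\<in>set_pmf p. pmf p x * log 2 (pmf p x / pmf r x)))"

end

theory Submission
  imports Defs "HOL-Library.Z2"
begin


declare mult_bit_eq_and[simp del] add_bit_eq_xor[simp del]

lemma of_nat_bit: "(of_nat m :: bit) = of_bool (odd m)"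
  by (induction m) auto

lemma sum_of_bool_bit: "(\<Sum>i<(M::nat). (of_bool (P i) :: bit)) = of_bool (odd (card {i. i < M \<and> P i}))"
proof -
  have "(\<Sum>i<M. (of_bool (P i) :: bit)) = of_nat (card ({..<M} \<inter> {i. P i}))"
    by (simp only: sum_of_bool_eq finite_lessThan)
  also have "{..<M} \<inter> {i. P i} = {i. i < M \<and> P i}" by auto
  finally show ?thesis by (simp add: of_nat_bit)
qed

definition gb :: "nat \<Rightarrow> nat \<Rightarrow> nat \<Rightarrow> bit" where
  "gb n i j = of_bool (polarG n i j)"

lemma sum_double_range:
  fixes f :: "nat \<Rightarrow> 'a::comm_monoid_add"
  shows "(\<Sum>j<M+M. f j) = (\<Sum>j<M. f j) + (\<Sum>j<M. f (j + M))"
proof -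
  have "(\<Sum>j<M+M. f j) = (\<Sum>j\<in>{0..<M}. f j) + (\<Sum>j\<in>{M..<M+M}. f j)"
    by (simp add: atLeast0LessThan[symmetric] sum.atLeastLessThan_concat)
  also have "(\<Sum>j\<in>{M..<M+M}. f j) = (\<Sum>j\<in>{0..<M}. f (j + M))"
    using sum.shift_bounds_nat_ivl[of f 0 M M] by simp
  finally show ?thesis by (simp add: atLeast0LessThan)
qed

lemma GG:
  "i < 2^n \<Longrightarrow> k < 2^n \<Longrightarrow> (\<Sum>j<2^n. gb n i j * gb n j k) = of_bool (i = k)"
proof (induction n arbitrary: i k)
  case 0
  then show ?case by (simp add: gb_def)
next
  case (Suc n)
  define M :: nat where "M = 2^n"
  have M: "M > 0" unfolding M_def by simp
  have i1: "i div M < 2" and k1: "k div M < 2" using Suc.prems unfolding M_def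
    by (simp_all add: less_mult_imp_div_less mult.commute)
  have S: "(\<Sum>j<M. gb n (i mod M) j * gb n j (k mod M)) = of_bool (i mod M = k mod M)"
    using Suc.IH[of "i mod M" "k mod M"] M unfolding M_def by simp
  have "(\<Sum>j<2^Suc n. gb (Suc n) i j * gb (Suc n) j k) = (\<Sum>j<M+M. gb (Suc n) i j * gb (Suc n) j k)"
    by (simp add: M_def mult_2)
  also have "\<dots> = (\<Sum>j<M. gb (Suc n) i j * gb (Suc n) j k) + (\<Sum>j<M. gb (Suc n) i (j+M) * gb (Suc n) (j+M) k)"
    by (rule sum_double_range)
  also have "(\<Sum>j<M. gb (Suc n) i j * gb (Suc n) j k) = (\<Sum>j<M. of_bool (k div M = 0) * (gb n (i mod M) j * gb n j (k mod M)))"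
    by (intro sum.cong refl) (auto simp: gb_def kern_F_def M_def[symmetric])
  also have "(\<Sum>j<M. gb (Suc n) i (j+M) * gb (Suc n) (j+M) k) = (\<Sum>j<M. of_bool (1 \<le> i div M) * (gb n (i mod M) j * gb n j (k mod M)))"
    using M k1 by (intro sum.cong refl) (auto simp: gb_def kern_F_def M_def[symmetric])
  finally have "(\<Sum>j<2^Suc n. gb (Suc n) i j * gb (Suc n) j k) =
      (of_bool (k div M = 0) + of_bool (1 \<le> i div M)) * of_bool (i mod M = k mod M)"
    by (simp add: sum_distrib_left[symmetric] S distrib_right)
  also have "\<dots> = of_bool (i div M = k div M) * of_bool (i mod M = k mod M)"
  proof -
    have d: "i div M = 0 \<or> i div M = 1" "k div M = 0 \<or> k div M = 1" using i1 k1 by linarith+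
    have c: "(of_bool (k div M = 0) + of_bool (1 \<le> i div M) :: bit) = of_bool (i div M = k div M)"
      using d by (elim disjE) (simp_all only: one_add_one bit_2_eq_0 of_bool_eq add_0 add_0_right refl simp_thms le_refl not_one_le_zero zero_neq_one one_neq_zero)
    then show ?thesis by (simp only: c)
  qed
  also have "\<dots> = of_bool (i = k)"
  proof -
    have e: "(i div M = k div M \<and> i mod M = k mod M) = (i = k)" by (metis div_mult_mod_eq)
    show ?thesis by (simp only: of_bool_conj[symmetric] e)
  qed
  finally show ?case .
qed

lemma length_polar[simp]: "length (polar n u) = 2^n"
  by (simp add: polar_def)

lemma polar_nth_bit: "j < 2^n \<Longrightarrow> (of_bool (polar n u ! j) :: bit) = (\<Sum>i<2^n. of_bool (u ! i) * gb n i j)"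
proof -
  assume j: "j < 2^n"
  have "(\<Sum>i<2^n. of_bool (u ! i) * gb n i j) = (\<Sum>i<2^n. (of_bool (u ! i \<and> polarG n i j) :: bit))"
    by (simp only: gb_def of_bool_conj)
  also have "\<dots> = of_bool (odd (card {i. i < 2^n \<and> u ! i \<and> polarG n i j}))"
    by (rule sum_of_bool_bit)
  finally show ?thesis using j by (simp add: polar_def)
qed

lemma polar_polar: assumes "length u = 2^n" shows "polar n (polar n u) = u"
proof (rule nth_equalityI)
  show "length (polar n (polar n u)) = length u" using assms by simp
  fix k assume "k < length (polar n (polar n u))"
  hence k: "k < 2^n" by simp
  have "(of_bool (polar n (polar n u) ! k) :: bit) = (\<Sum>j<2^n. (\<Sum>i<2^n. of_bool (u ! i) * gb n i j) * gb n j k)"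
    using k by (simp add: polar_nth_bit)
  also have "\<dots> = (\<Sum>i<2^n. of_bool (u ! i) * (\<Sum>j<2^n. gb n i j * gb n j k))"
    by (simp only: sum_distrib_left sum_distrib_right mult.assoc) (rule sum.swap)
  also have "\<dots> = (\<Sum>i<2^n. of_bool (u ! i) * of_bool (i = k))"
    using k by (intro sum.cong refl) (simp add: GG)
  also have "\<dots> = (\<Sum>i\<in>{..<2^n}. if i = k then of_bool (u ! k) else (0::bit))"
    by (rule sum.cong) auto
  also have "\<dots> = of_bool (u ! k)" using k by (simp only: sum.delta finite_lessThan) simp
  finally show "polar n (polar n u) ! k = u ! k" by (simp only: of_bool_eq_iff)
qed

lemma polar_inj: "length u = 2^n \<Longrightarrow> length v = 2^n \<Longrightarrow> polar n u = polar n v \<Longrightarrow> u = v"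
  by (metis polar_polar)


definition kl :: "'a pmf \<Rightarrow> 'a pmf \<Rightarrow> real" where
  "kl p r = (\<Sum>x\<in>set_pmf p. pmf p x * log 2 (pmf p x / pmf r x))"

definition good :: "'a pmf \<Rightarrow> 'a pmf \<Rightarrow> bool" where
  "good p r \<longleftrightarrow> finite (set_pmf p) \<and> set_pmf p \<subseteq> set_pmf r"

lemma KL_eq: "set_pmf p \<subseteq> set_pmf r \<Longrightarrow> KL p r = ereal (kl p r)"
  unfolding KL_def kl_def by (auto simp: set_pmf_iff)

lemma kl_self: "kl p p = 0"
  unfolding kl_def by (rule sum.neutral) (auto simp: set_pmf_iff)

lemma good_self: "finite (set_pmf p) \<Longrightarrow> good p p"
  by (simp add: good_def)

lemma kl_map_inj:
  assumes inj: "inj_on h (set_pmf r)" and g: "good p r"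
  shows "good (map_pmf h p) (map_pmf h r) \<and> kl (map_pmf h p) (map_pmf h r) = kl p r"
proof -
  have sub: "set_pmf p \<subseteq> set_pmf r" using g by (simp add: good_def)
  have ip: "inj_on h (set_pmf p)" using inj sub by (rule inj_on_subset)
  have "kl (map_pmf h p) (map_pmf h r) = (\<Sum>x\<in>h ` set_pmf p. pmf (map_pmf h p) x * log 2 (pmf (map_pmf h p) x / pmf (map_pmf h r) x))"
    by (simp add: kl_def)
  also have "\<dots> = (\<Sum>x\<in>set_pmf p. pmf (map_pmf h p) (h x) * log 2 (pmf (map_pmf h p) (h x) / pmf (map_pmf h r) (h x)))"
    by (rule sum.reindex[OF ip, unfolded comp_def])
  also have "\<dots> = kl p r" unfolding kl_def
    using inj ip sub by (intro sum.cong refl) (auto simp: pmf_map_inj)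
  finally show ?thesis using g by (auto simp: good_def)
qed

lemma pmf_bind_Pair: "pmf (bind_pmf p (\<lambda>a. map_pmf (Pair a) (f a))) (a, b) = pmf p a * pmf (f a) b"
proof -
  have "pmf (bind_pmf p (\<lambda>a. map_pmf (Pair a) (f a))) (a, b) = (\<integral>a'. pmf (map_pmf (Pair a') (f a')) (a, b) \<partial>measure_pmf p)"
    by (rule pmf_bind)
  also have "\<dots> = (\<Sum>a'\<in>{a}. pmf (map_pmf (Pair a') (f a')) (a, b) * pmf p a')"
    by (rule integral_measure_pmf_real) (auto simp: pmf_eq_0_set_pmf)
  also have e: "pmf (map_pmf (Pair a) (f a)) (a, b) = pmf (f a) b"
    by (rule pmf_map_inj') (auto simp: inj_on_def)
  hence "(\<Sum>a'\<in>{a}. pmf (map_pmf (Pair a') (f a')) (a, b) * pmf p a') = pmf p a * pmf (f a) b"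
    by simp
  finally show ?thesis .
qed

lemma set_bind_Pair: "set_pmf (bind_pmf p (\<lambda>a. map_pmf (Pair a) (f a))) = Sigma (set_pmf p) (\<lambda>a. set_pmf (f a))"
  by auto

lemma kl_chain:
  assumes g: "good p r" and gf: "\<forall>a\<in>set_pmf p. good (f a) (g a)"
  shows "good (bind_pmf p (\<lambda>a. map_pmf (Pair a) (f a))) (bind_pmf r (\<lambda>a. map_pmf (Pair a) (g a)))
    \<and> kl (bind_pmf p (\<lambda>a. map_pmf (Pair a) (f a))) (bind_pmf r (\<lambda>a. map_pmf (Pair a) (g a)))
       = kl p r + (\<Sum>a\<in>set_pmf p. pmf p a * kl (f a) (g a))"
proof
  have fp: "finite (set_pmf p)" and sub: "set_pmf p \<subseteq> set_pmf r" using g by (auto simp: good_def)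
  have ff: "\<And>a. a \<in> set_pmf p \<Longrightarrow> finite (set_pmf (f a))" and subf: "\<And>a. a \<in> set_pmf p \<Longrightarrow> set_pmf (f a) \<subseteq> set_pmf (g a)"
    using gf by (auto simp: good_def)
  show "good (bind_pmf p (\<lambda>a. map_pmf (Pair a) (f a))) (bind_pmf r (\<lambda>a. map_pmf (Pair a) (g a)))"
    unfolding good_def set_bind_Pair using fp ff sub subf by auto
  let ?L = "\<lambda>a b. log 2 (pmf p a / pmf r a) + log 2 (pmf (f a) b / pmf (g a) b)"
  have "kl (bind_pmf p (\<lambda>a. map_pmf (Pair a) (f a))) (bind_pmf r (\<lambda>a. map_pmf (Pair a) (g a)))
      = (\<Sum>(a,b)\<in>Sigma (set_pmf p) (\<lambda>a. set_pmf (f a)). pmf p a * pmf (f a) b * log 2 ((pmf p a * pmf (f a) b) / (pmf r a * pmf (g a) b)))"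
    unfolding kl_def set_bind_Pair by (intro sum.cong refl) (clarsimp simp: pmf_bind_Pair)
  also have "\<dots> = (\<Sum>a\<in>set_pmf p. \<Sum>b\<in>set_pmf (f a). pmf p a * pmf (f a) b * ?L a b)"
  proof -
    have "(\<Sum>(a,b)\<in>Sigma (set_pmf p) (\<lambda>a. set_pmf (f a)). pmf p a * pmf (f a) b * log 2 ((pmf p a * pmf (f a) b) / (pmf r a * pmf (g a) b)))
        = (\<Sum>(a,b)\<in>Sigma (set_pmf p) (\<lambda>a. set_pmf (f a)). pmf p a * pmf (f a) b * ?L a b)"
    proof (intro sum.cong refl, clarify)
      fix a b assume a: "a \<in> set_pmf p" and b: "b \<in> set_pmf (f a)"
      have pos: "pmf p a > 0" "pmf r a > 0" "pmf (f a) b > 0" "pmf (g a) b > 0"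
        using a b sub subf[OF a] by (auto simp: pmf_positive)
      have "(pmf p a * pmf (f a) b) / (pmf r a * pmf (g a) b) = (pmf p a / pmf r a) * (pmf (f a) b / pmf (g a) b)"
        by simp
      then show "pmf p a * pmf (f a) b * log 2 ((pmf p a * pmf (f a) b) / (pmf r a * pmf (g a) b)) = pmf p a * pmf (f a) b * ?L a b"
        using pos by (simp add: log_divide_pos log_mult_pos)
    qed
    also have "\<dots> = (\<Sum>a\<in>set_pmf p. \<Sum>b\<in>set_pmf (f a). pmf p a * pmf (f a) b * ?L a b)"
      using fp ff by (subst sum.Sigma) auto
    finally show ?thesis .
  qed
  also have "\<dots> = (\<Sum>a\<in>set_pmf p. pmf p a * log 2 (pmf p a / pmf r a) * (\<Sum>b\<in>set_pmf (f a). pmf (f a) b)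
                 + pmf p a * kl (f a) (g a))"
    by (intro sum.cong refl) (simp add: kl_def distrib_left sum.distrib sum_distrib_left sum_distrib_right mult_ac)
  also have "\<dots> = (\<Sum>a\<in>set_pmf p. pmf p a * log 2 (pmf p a / pmf r a) + pmf p a * kl (f a) (g a))"
    using ff by (intro sum.cong refl) (simp add: sum_pmf_eq_1)
  also have "\<dots> = kl p r + (\<Sum>a\<in>set_pmf p. pmf p a * kl (f a) (g a))"
    by (simp add: kl_def sum.distrib)
  finally show "kl (bind_pmf p (\<lambda>a. map_pmf (Pair a) (f a))) (bind_pmf r (\<lambda>a. map_pmf (Pair a) (g a)))
       = kl p r + (\<Sum>a\<in>set_pmf p. pmf p a * kl (f a) (g a))" .
qed

lemma bind_map_Pair: "bind_pmf p (\<lambda>a. map_pmf (h a) (f a)) = map_pmf (case_prod h) (bind_pmf p (\<lambda>a. map_pmf (Pair a) (f a)))"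
  by (simp add: map_bind_pmf map_pmf_comp)

lemma kl_chain_inj:
  assumes g: "good p r" and gf: "\<forall>a\<in>set_pmf p. good (f a) (g a)"
    and inj: "inj_on (case_prod h) (Sigma (set_pmf r) (\<lambda>a. set_pmf (g a)))"
  shows "good (bind_pmf p (\<lambda>a. map_pmf (h a) (f a))) (bind_pmf r (\<lambda>a. map_pmf (h a) (g a)))
    \<and> kl (bind_pmf p (\<lambda>a. map_pmf (h a) (f a))) (bind_pmf r (\<lambda>a. map_pmf (h a) (g a)))
       = kl p r + (\<Sum>a\<in>set_pmf p. pmf p a * kl (f a) (g a))"
proof -
  have i: "inj_on (case_prod h) (set_pmf (bind_pmf r (\<lambda>a. map_pmf (Pair a) (g a))))"
    using inj by (simp only: set_bind_Pair)
  show ?thesis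
    unfolding bind_map_Pair[of p h f] bind_map_Pair[of r h g]
    using kl_map_inj[OF i] kl_chain[OF g gf] by simp
qed

lemma finite_bool_pmf: "finite (set_pmf (p :: bool pmf))"
  by (rule finite_subset[of _ UNIV]) auto

lemma set_succ_gen_length: "w \<in> set_pmf (succ_gen j f) \<Longrightarrow> length w = j"
  by (induction j arbitrary: w) auto

lemma succ_gen_kl:
  assumes "\<And>i w. set_pmf (f1 i w) \<subseteq> set_pmf (f2 i w)"
  shows "good (succ_gen j f1) (succ_gen j f2) \<and> kl (succ_gen j f1) (succ_gen j f2)
     = (\<Sum>i<j. \<Sum>w\<in>set_pmf (succ_gen i f1). pmf (succ_gen i f1) w * kl (f1 i w) (f2 i w))"
proof (induction j)
  case 0
  then show ?case by (simp add: good_def kl_def)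
next
  case (Suc j)
  have gf: "\<forall>a\<in>set_pmf (succ_gen j f1). good (f1 j a) (f2 j a)"
    using assms by (auto simp: good_def finite_bool_pmf)
  have inj: "inj_on (case_prod (\<lambda>w b. w @ [b])) X" for X
    by (auto simp: inj_on_def)
  show ?case using kl_chain_inj[OF conjunct1[OF Suc.IH] gf inj] Suc.IH by simp
qed

lemma finite_seq: "(\<And>p. p \<in> set ps \<Longrightarrow> finite (set_pmf p)) \<Longrightarrow> finite (set_pmf (seq_pmf ps))"
  by (induction ps) auto

lemma set_seq_length: "xs \<in> set_pmf (seq_pmf ps) \<Longrightarrow> length xs = length ps"
  by (induction ps arbitrary: xs) auto

lemma set_seq_all: "xs \<in> set_pmf (seq_pmf ps) \<Longrightarrow> list_all2 (\<lambda>x p. x \<in> set_pmf p) xs ps"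
  by (induction ps arbitrary: xs) auto

lemma seq_kl_rep:
  assumes "good P R"
  shows "good (seq_pmf (replicate L P)) (seq_pmf (replicate L R)) \<and>
         kl (seq_pmf (replicate L P)) (seq_pmf (replicate L R)) = real L * kl P R"
proof (induction L)
  case 0
  then show ?case by (simp add: good_def kl_def)
next
  case (Suc L)
  have fP: "finite (set_pmf P)" using assms by (simp add: good_def)
  have gf: "\<forall>a\<in>set_pmf P. good (seq_pmf (replicate L P)) (seq_pmf (replicate L R))"
    using Suc.IH by simp
  have inj: "inj_on (case_prod Cons) X" for X by (auto simp: inj_on_def)
  have "(\<Sum>a\<in>set_pmf P. pmf P a * kl (seq_pmf (replicate L P)) (seq_pmf (replicate L R)))
      = (\<Sum>a\<in>set_pmf P. pmf P a) * kl (seq_pmf (replicate L P)) (seq_pmf (replicate L R))"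
    by (simp add: sum_distrib_right)
  also have "\<dots> = real L * kl P R" using fP Suc.IH by (simp add: sum_pmf_eq_1)
  finally show ?case using kl_chain_inj[OF assms gf inj] by (simp add: algebra_simps)
qed

lemma exp_sum: "finite (set_pmf p) \<Longrightarrow> measure_pmf.expectation p F = (\<Sum>a\<in>set_pmf p. pmf p a * F a)"
  by (subst integral_measure_pmf_real[of "set_pmf p"]) (auto simp: mult.commute)


lemma measure_cond_pmf:
  assumes "set_pmf P \<inter> A \<noteq> {}"
  shows "measure_pmf.prob (cond_pmf P A) B = measure_pmf.prob P (A \<inter> B) / measure_pmf.prob P A"
proof -
  have "measure_pmf (cond_pmf P A) = uniform_measure (measure_pmf P) A" by (rule cond_pmf.rep_eq[OF assms])
  moreover have "Sigma_Algebra.measure (uniform_measure (measure_pmf P) A) B = measure_pmf.prob P (A \<inter> B) / measure_pmf.prob P A"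
    by (rule measure_uniform_measure) (simp_all add: emeasure_measure_pmf_not_zero[OF assms] measure_pmf.emeasure_finite)
  ultimately show ?thesis by simp
qed

lemma cond_cond_pmf:
  assumes "set_pmf P \<inter> (A \<inter> B) \<noteq> {}"
  shows "cond_pmf (cond_pmf P A) B = cond_pmf P (A \<inter> B)"
proof (rule pmf_eqI)
  fix x
  have a: "set_pmf P \<inter> A \<noteq> {}" using assms by auto
  have b: "set_pmf (cond_pmf P A) \<inter> B \<noteq> {}" using assms a by auto
  have pA: "measure_pmf.prob P A > 0" using a by (auto intro: measure_pmf_posI)
  show "pmf (cond_pmf (cond_pmf P A) B) x = pmf (cond_pmf P (A \<inter> B)) x"
    using pA by (simp add: pmf_cond[OF b] pmf_cond[OF a] pmf_cond[OF assms] measure_cond_pmf[OF a])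
qed

lemma cond_pmf_UNIV: "cond_pmf P UNIV = P"
  by (rule pmf_eqI) (simp add: pmf_cond[of P UNIV] set_pmf_not_empty)

lemma disint_bind: "bind_pmf (map_pmf t M) (\<lambda>w. cond_pmf M {c. t c = w}) = M"
proof -
  have "bind_pmf (map_pmf t M) (\<lambda>w. cond_pmf M {c. t c = w}) = M"
    by (rule bind_cond_pmf_cancel) (auto simp: vimage_def)
  then show ?thesis .
qed

definition cq :: "'c pmf \<Rightarrow> ('c \<Rightarrow> bool list) \<Rightarrow> ('c \<Rightarrow> 'k) \<Rightarrow> 'k \<Rightarrow> nat \<Rightarrow> bool list \<Rightarrow> bool pmf" where
  "cq P \<phi> \<psi> k i w = cond_on P (\<lambda>c. \<phi> c ! i) {c. take i (\<phi> c) = w \<and> \<psi> c = k}"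

definition cp :: "'c pmf \<Rightarrow> ('c \<Rightarrow> bool list) \<Rightarrow> ('c \<Rightarrow> 'k) \<Rightarrow> nat set \<Rightarrow> 'k \<Rightarrow> nat \<Rightarrow> bool list \<Rightarrow> bool pmf" where
  "cp P \<phi> \<psi> S k i w = (if i \<in> S then coin else cq P \<phi> \<psi> k i w)"

lemma set_coin[simp]: "set_pmf coin = UNIV"
  by (simp add: coin_def)

lemma pmf_coin[simp]: "pmf coin b = 1/2"
  by (simp add: coin_def)

lemma set_cq_cp: "set_pmf (cq P \<phi> \<psi> k i w) \<subseteq> set_pmf (cp P \<phi> \<psi> S k i w)"
  by (simp add: cp_def)

lemma disint:
  assumes len: "\<forall>c\<in>set_pmf P. length (\<phi> c) = K" and k: "k \<in> \<psi> ` set_pmf P" and j: "j \<le> K"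
  shows "map_pmf (\<lambda>c. take j (\<phi> c)) (cond_pmf P {c. \<psi> c = k}) = succ_gen j (cq P \<phi> \<psi> k)"
  using j
proof (induction j)
  case 0
  then show ?case by simp
next
  case (Suc j)
  define Pk where "Pk = cond_pmf P {c. \<psi> c = k}"
  have ne: "set_pmf P \<inter> {c. \<psi> c = k} \<noteq> {}" using k by auto
  have IH: "map_pmf (\<lambda>c. take j (\<phi> c)) Pk = succ_gen j (cq P \<phi> \<psi> k)"
    using Suc by (simp add: Pk_def)
  have "map_pmf (\<lambda>c. take (Suc j) (\<phi> c)) Pk
      = map_pmf (\<lambda>c. take (Suc j) (\<phi> c)) (bind_pmf (map_pmf (\<lambda>c. take j (\<phi> c)) Pk) (\<lambda>w. cond_pmf Pk {c. take j (\<phi> c) = w}))"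
    by (simp only: disint_bind)
  also have "\<dots> = bind_pmf (succ_gen j (cq P \<phi> \<psi> k)) (\<lambda>w. map_pmf (\<lambda>c. take (Suc j) (\<phi> c)) (cond_pmf Pk {c. take j (\<phi> c) = w}))"
    by (simp add: map_bind_pmf IH)
  also have "\<dots> = bind_pmf (succ_gen j (cq P \<phi> \<psi> k)) (\<lambda>w. map_pmf (\<lambda>b. w @ [b]) (cq P \<phi> \<psi> k j w))"
  proof (rule bind_pmf_cong[OF refl])
    fix w assume "w \<in> set_pmf (succ_gen j (cq P \<phi> \<psi> k))"
    hence "w \<in> set_pmf (map_pmf (\<lambda>c. take j (\<phi> c)) Pk)" by (simp only: IH)
    then obtain c0 where c0: "c0 \<in> set_pmf P" "\<psi> c0 = k" "take j (\<phi> c0) = w"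
      using ne by (auto simp: Pk_def)
    define E where "E = {c. take j (\<phi> c) = w \<and> \<psi> c = k}"
    have neE: "set_pmf P \<inter> E \<noteq> {}" using c0 by (auto simp: E_def)
    have "cond_pmf Pk {c. take j (\<phi> c) = w} = cond_pmf P E"
    proof -
      have "{c. \<psi> c = k} \<inter> {c. take j (\<phi> c) = w} = E" by (auto simp: E_def)
      then show ?thesis unfolding Pk_def using cond_cond_pmf[of P "{c. \<psi> c = k}" "{c. take j (\<phi> c) = w}"] neE by simp
    qed
    moreover have "cq P \<phi> \<psi> k j w = map_pmf (\<lambda>c. \<phi> c ! j) (cond_pmf P E)"
      using neE by (simp add: cq_def cond_on_def E_def)
    moreover have "map_pmf (\<lambda>c. take (Suc j) (\<phi> c)) (cond_pmf P E) = map_pmf (\<lambda>b. w @ [b]) (map_pmf (\<lambda>c. \<phi> c ! j) (cond_pmf P E))"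
      unfolding map_pmf_comp
    proof (rule map_pmf_cong[OF refl])
      fix c assume "c \<in> set_pmf (cond_pmf P E)"
      hence "c \<in> set_pmf P" "take j (\<phi> c) = w" using neE by (auto simp: E_def)
      moreover have "j < length (\<phi> c)" using len \<open>c \<in> set_pmf P\<close> Suc.prems by auto
      ultimately show "take (Suc j) (\<phi> c) = w @ [\<phi> c ! j]" by (simp add: take_Suc_conv_app_nth)
    qed
    ultimately show "map_pmf (\<lambda>c. take (Suc j) (\<phi> c)) (cond_pmf Pk {c. take j (\<phi> c) = w}) = map_pmf (\<lambda>b. w @ [b]) (cq P \<phi> \<psi> k j w)"
      by simp
  qed
  also have "\<dots> = succ_gen (Suc j) (cq P \<phi> \<psi> k)" by simp
  finally show ?case by (simp add: Pk_def)
qed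


lemma exp_cong:
  fixes f g :: "'a \<Rightarrow> real"
  shows "finite (set_pmf p) \<Longrightarrow> (\<And>x. x \<in> set_pmf p \<Longrightarrow> f x = g x) \<Longrightarrow>
    measure_pmf.expectation p f = measure_pmf.expectation p g"
  by (simp add: exp_sum)

lemma exp_bind_sum:
  assumes "finite (set_pmf p)" "\<And>a. a \<in> set_pmf p \<Longrightarrow> finite (set_pmf (f a))"
  shows "measure_pmf.expectation (bind_pmf p f) h = (\<Sum>a\<in>set_pmf p. pmf p a * measure_pmf.expectation (f a) h)"
  using pmf_expectation_bind[of "set_pmf p" f p h] assms by simp

lemma finite_cond: "finite (set_pmf P) \<Longrightarrow> set_pmf P \<inter> A \<noteq> {} \<Longrightarrow> finite (set_pmf (cond_pmf P A))"
  by simp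

lemma cond_key:
  assumes "set_pmf P \<inter> {c. t c = w \<and> \<psi> c = k} \<noteq> {}"
  shows "cond_pmf (cond_pmf P {c. \<psi> c = k}) {c. t c = w} = cond_pmf P {c. t c = w \<and> \<psi> c = k}"
proof -
  have "{c. \<psi> c = k} \<inter> {c. t c = w} = {c. t c = w \<and> \<psi> c = k}" by auto
  then show ?thesis using cond_cond_pmf[of P "{c. \<psi> c = k}" "{c. t c = w}"] assms by simp
qed

lemma kl_coin_exp:
  assumes "finite (set_pmf C)"
  shows "kl (map_pmf g C) coin = measure_pmf.expectation C (\<lambda>c. log 2 (2 * pmf (map_pmf g C) (g c)))"
proof -
  have "kl (map_pmf g C) coin = (\<Sum>b\<in>set_pmf (map_pmf g C). pmf (map_pmf g C) b * log 2 (2 * pmf (map_pmf g C) b))"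
    unfolding kl_def by (intro sum.cong refl) (simp add: mult.commute)
  also have "\<dots> = measure_pmf.expectation (map_pmf g C) (\<lambda>b. log 2 (2 * pmf (map_pmf g C) b))"
    by (rule exp_sum[symmetric]) (simp add: assms)
  finally show ?thesis by simp
qed

lemma EI:
  fixes P :: "'c pmf" and \<phi> :: "'c \<Rightarrow> bool list" and \<psi> :: "'c \<Rightarrow> 'k"
  assumes fin: "finite (set_pmf P)" and len: "\<forall>c\<in>set_pmf P. length (\<phi> c) = K" and i: "i < K"
  shows "(\<Sum>k\<in>set_pmf (map_pmf \<psi> P). pmf (map_pmf \<psi> P) k *
           (\<Sum>w\<in>set_pmf (succ_gen i (cq P \<phi> \<psi> k)). pmf (succ_gen i (cq P \<phi> \<psi> k)) w * kl (cq P \<phi> \<psi> k i w) coin))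
         = 1 - cond_ent (map_pmf (\<lambda>c. (\<phi> c ! i, (take i (\<phi> c), \<psi> c))) P)"
proof -
  define g where "g = (\<lambda>c. (\<phi> c ! i, (take i (\<phi> c), \<psi> c)))"
  define g2 where "g2 = (\<lambda>c. (take i (\<phi> c), \<psi> c))"
  define J where "J = map_pmf g P"
  define J2 where "J2 = map_pmf g2 P"
  define F where "F = (\<lambda>c. log 2 (2 * (pmf J (g c) / pmf J2 (g2 c))))"
  define L where "L = (\<lambda>x. log 2 (pmf J x / pmf J2 (snd x)))"
  have mJ: "map_pmf snd J = J2" by (simp add: J_def J2_def map_pmf_comp g_def g2_def)
  have finJ: "finite (set_pmf J)" using fin by (simp add: J_def)
  have A: "measure_pmf.expectation P F = 1 - cond_ent J"
  proof -
    have "cond_ent J = - (\<Sum>x\<in>set_pmf J. pmf J x * L x)"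
      by (simp add: cond_ent_def mJ L_def)
    also have "(\<Sum>x\<in>set_pmf J. pmf J x * L x) = measure_pmf.expectation J L"
      using finJ by (simp add: exp_sum)
    also have "\<dots> = measure_pmf.expectation P (\<lambda>c. L (g c))"
      by (simp add: J_def)
    finally have c: "cond_ent J = - measure_pmf.expectation P (\<lambda>c. L (g c))" .
    have "measure_pmf.expectation P F = measure_pmf.expectation P (\<lambda>c. 1 + L (g c))"
    proof (rule exp_cong[OF fin])
      fix c assume c: "c \<in> set_pmf P"
      have "pmf J (g c) > 0" using c by (auto simp: J_def pmf_positive)
      moreover have "pmf J2 (g2 c) > 0" using c by (auto simp: J2_def pmf_positive)
      ultimately have r: "pmf J (g c) / pmf J2 (g2 c) > 0" by simp
      show "F c = 1 + L (g c)"
        unfolding F_def L_def by (subst log_mult_pos[OF _ r]) (auto simp: g_def g2_def)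
    qed
    also have "\<dots> = 1 + measure_pmf.expectation P (\<lambda>c. L (g c))"
      using fin by (simp add: exp_sum sum.distrib distrib_left sum_pmf_eq_1)
    finally show ?thesis using c by simp
  qed
  have B: "measure_pmf.expectation P F = (\<Sum>k\<in>set_pmf (map_pmf \<psi> P). pmf (map_pmf \<psi> P) k *
              measure_pmf.expectation (cond_pmf P {c. \<psi> c = k}) F)"
  proof -
    have "measure_pmf.expectation P F = measure_pmf.expectation (bind_pmf (map_pmf \<psi> P) (\<lambda>k. cond_pmf P {c. \<psi> c = k})) F"
      by (simp only: disint_bind)
    also have "\<dots> = (\<Sum>k\<in>set_pmf (map_pmf \<psi> P). pmf (map_pmf \<psi> P) k *
              measure_pmf.expectation (cond_pmf P {c. \<psi> c = k}) F)"
      by (rule exp_bind_sum) (auto intro!: finite_cond fin)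
    finally show ?thesis .
  qed
  have CD: "measure_pmf.expectation (cond_pmf P {c. \<psi> c = k}) F =
      (\<Sum>w\<in>set_pmf (succ_gen i (cq P \<phi> \<psi> k)). pmf (succ_gen i (cq P \<phi> \<psi> k)) w * kl (cq P \<phi> \<psi> k i w) coin)"
    if k: "k \<in> set_pmf (map_pmf \<psi> P)" for k
  proof -
    define Pk where "Pk = cond_pmf P {c. \<psi> c = k}"
    define t where "t = (\<lambda>c. take i (\<phi> c))"
    have ne: "set_pmf P \<inter> {c. \<psi> c = k} \<noteq> {}" using k by auto
    have finPk: "finite (set_pmf Pk)" using fin ne by (auto simp: Pk_def intro: finite_subset)
    have D: "map_pmf t Pk = succ_gen i (cq P \<phi> \<psi> k)"
      unfolding Pk_def t_def by (rule disint) (use len k i in auto)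
    have "measure_pmf.expectation Pk F = measure_pmf.expectation (bind_pmf (map_pmf t Pk) (\<lambda>w. cond_pmf Pk {c. t c = w})) F"
      by (simp only: disint_bind)
    also have "\<dots> = (\<Sum>w\<in>set_pmf (map_pmf t Pk). pmf (map_pmf t Pk) w * measure_pmf.expectation (cond_pmf Pk {c. t c = w}) F)"
      by (rule exp_bind_sum) (auto intro!: finite_cond finPk)
    also have "\<dots> = (\<Sum>w\<in>set_pmf (map_pmf t Pk). pmf (map_pmf t Pk) w * kl (cq P \<phi> \<psi> k i w) coin)"
    proof (intro sum.cong refl arg_cong2[where f="(*)"])
      fix w assume w: "w \<in> set_pmf (map_pmf t Pk)"
      define E where "E = {c. take i (\<phi> c) = w \<and> \<psi> c = k}"
      have neE: "set_pmf P \<inter> E \<noteq> {}" using w ne by (auto simp: Pk_def t_def E_def)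
      define C where "C = cond_pmf P E"
      have CC: "cond_pmf Pk {c. t c = w} = C"
        unfolding Pk_def C_def t_def E_def by (rule cond_key) (use neE in \<open>simp add: E_def\<close>)
      have finC: "finite (set_pmf C)" using fin neE by (auto simp: C_def intro: finite_subset)
      have cq: "cq P \<phi> \<psi> k i w = map_pmf (\<lambda>c. \<phi> c ! i) C"
        using neE by (simp add: cq_def cond_on_def E_def C_def)
      have pE: "measure_pmf.prob P E > 0" using neE by (auto intro: measure_pmf_posI)
      have "measure_pmf.expectation C F = measure_pmf.expectation C (\<lambda>c. log 2 (2 * pmf (map_pmf (\<lambda>c. \<phi> c ! i) C) (\<phi> c ! i)))"
      proof (rule exp_cong[OF finC])
        fix c assume c: "c \<in> set_pmf C"
        hence cE: "take i (\<phi> c) = w" "\<psi> c = k" using neE by (auto simp: C_def E_def)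
        have e1: "g -` {g c} = E \<inter> (\<lambda>c. \<phi> c ! i) -` {\<phi> c ! i}" using cE by (auto simp: g_def E_def)
        have e2: "g2 -` {g2 c} = E" using cE by (auto simp: g2_def E_def)
        have "pmf J (g c) / pmf J2 (g2 c) = pmf (map_pmf (\<lambda>c. \<phi> c ! i) C) (\<phi> c ! i)"
          unfolding J_def J2_def pmf_map C_def measure_cond_pmf[OF neE] e1 e2 by simp
        then show "F c = log 2 (2 * pmf (map_pmf (\<lambda>c. \<phi> c ! i) C) (\<phi> c ! i))"
          unfolding F_def by (simp only:)
      qed
      also have "\<dots> = kl (cq P \<phi> \<psi> k i w) coin" using finC by (simp add: cq kl_coin_exp)
      finally show "measure_pmf.expectation (cond_pmf Pk {c. t c = w}) F = kl (cq P \<phi> \<psi> k i w) coin"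
        by (simp add: CC)
    qed
    finally have X: "measure_pmf.expectation Pk F = (\<Sum>w\<in>set_pmf (map_pmf t Pk). pmf (map_pmf t Pk) w * kl (cq P \<phi> \<psi> k i w) coin)" .
    show ?thesis using X unfolding D unfolding Pk_def .
  qed
  have "1 - cond_ent J = (\<Sum>k\<in>set_pmf (map_pmf \<psi> P). pmf (map_pmf \<psi> P) k *
           (\<Sum>w\<in>set_pmf (succ_gen i (cq P \<phi> \<psi> k)). pmf (succ_gen i (cq P \<phi> \<psi> k)) w * kl (cq P \<phi> \<psi> k i w) coin))"
    unfolding A[symmetric] B by (intro sum.cong refl) (simp add: CD)
  then show ?thesis by (simp add: J_def g_def)
qed


lemma GL:
  fixes P :: "'c pmf" and \<phi> :: "'c \<Rightarrow> bool list" and \<psi> :: "'c \<Rightarrow> 'k"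
  assumes fin: "finite (set_pmf P)" and len: "\<forall>c\<in>set_pmf P. length (\<phi> c) = K"
    and S: "S \<subseteq> {..<K}"
    and H: "\<forall>i\<in>S. cond_ent (map_pmf (\<lambda>c. (\<phi> c ! i, (take i (\<phi> c), \<psi> c))) P) > 1 - \<delta>"
    and d: "\<delta> \<ge> 0"
  shows "(\<Sum>k\<in>set_pmf (map_pmf \<psi> P). pmf (map_pmf \<psi> P) k *
            kl (succ_gen K (cq P \<phi> \<psi> k)) (succ_gen K (cp P \<phi> \<psi> S k))) \<le> real K * \<delta>"
proof -
  define X where "X k i = (\<Sum>w\<in>set_pmf (succ_gen i (cq P \<phi> \<psi> k)). pmf (succ_gen i (cq P \<phi> \<psi> k)) w * kl (cq P \<phi> \<psi> k i w) coin)" for k i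
  have e1: "kl (succ_gen K (cq P \<phi> \<psi> k)) (succ_gen K (cp P \<phi> \<psi> S k)) = (\<Sum>i<K. if i \<in> S then X k i else 0)" for k
  proof -
    have "kl (succ_gen K (cq P \<phi> \<psi> k)) (succ_gen K (cp P \<phi> \<psi> S k))
       = (\<Sum>i<K. \<Sum>w\<in>set_pmf (succ_gen i (cq P \<phi> \<psi> k)). pmf (succ_gen i (cq P \<phi> \<psi> k)) w * kl (cq P \<phi> \<psi> k i w) (cp P \<phi> \<psi> S k i w))"
      using succ_gen_kl[of "cq P \<phi> \<psi> k" "cp P \<phi> \<psi> S k" K, OF set_cq_cp] by (rule conjunct2)
    also have "\<dots> = (\<Sum>i<K. if i \<in> S then X k i else 0)"
      by (intro sum.cong refl) (simp add: cp_def kl_self X_def)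
    finally show ?thesis .
  qed
  have "(\<Sum>k\<in>set_pmf (map_pmf \<psi> P). pmf (map_pmf \<psi> P) k *
            kl (succ_gen K (cq P \<phi> \<psi> k)) (succ_gen K (cp P \<phi> \<psi> S k)))
      = (\<Sum>k\<in>set_pmf (map_pmf \<psi> P). \<Sum>i<K. pmf (map_pmf \<psi> P) k * (if i \<in> S then X k i else 0))"
    by (simp add: e1 sum_distrib_left)
  also have "\<dots> = (\<Sum>i<K. \<Sum>k\<in>set_pmf (map_pmf \<psi> P). pmf (map_pmf \<psi> P) k * (if i \<in> S then X k i else 0))"
    by (rule sum.swap)
  also have "\<dots> = (\<Sum>i<K. if i \<in> S then (\<Sum>k\<in>set_pmf (map_pmf \<psi> P). pmf (map_pmf \<psi> P) k * X k i) else 0)"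
    by (intro sum.cong refl) simp
  also have "\<dots> = (\<Sum>i<K. if i \<in> S then 1 - cond_ent (map_pmf (\<lambda>c. (\<phi> c ! i, (take i (\<phi> c), \<psi> c))) P) else 0)"
  proof (intro sum.cong refl)
    fix i assume i: "i \<in> {..<K}"
    show "(if i \<in> S then (\<Sum>k\<in>set_pmf (map_pmf \<psi> P). pmf (map_pmf \<psi> P) k * X k i) else 0) =
          (if i \<in> S then 1 - cond_ent (map_pmf (\<lambda>c. (\<phi> c ! i, (take i (\<phi> c), \<psi> c))) P) else 0)"
      using EI[OF fin len, of i \<psi>] i by (simp add: X_def)
  qed
  also have "\<dots> \<le> (\<Sum>i<K. \<delta>)"
    by (rule sum_mono) (use H d in auto)
  also have "\<dots> = real K * \<delta>" by simp
  finally show ?thesis .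
qed


lemma seq_append: "seq_pmf (xs @ ys) = bind_pmf (seq_pmf xs) (\<lambda>a. map_pmf (\<lambda>b. a @ b) (seq_pmf ys))"
proof (induction xs)
  case Nil
  have e: "((@) [] :: 'a list \<Rightarrow> 'a list) = id" by auto
  show ?case by (simp add: bind_return_pmf e pmf.map_id)
next
  case (Cons x xs)
  have e: "\<And>a x. ((@) (a # x)) = (\<lambda>xa. a # x @ xa)" by auto
  show ?case by (simp add: Cons.IH bind_assoc_pmf bind_map_pmf map_bind_pmf map_pmf_comp e)
qed

lemma seq_concat: "seq_pmf (concat xss) = map_pmf concat (seq_pmf (map seq_pmf xss))"
  by (induction xss) (simp_all add: seq_append bind_assoc_pmf bind_map_pmf map_bind_pmf map_pmf_comp)

lemma seq_map: "seq_pmf (map (map_pmf g) ps) = map_pmf (map g) (seq_pmf ps)"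
  by (induction ps) (simp_all add: bind_map_pmf map_bind_pmf map_pmf_comp)

lemma replicate_mult: "replicate (K * L) x = concat (replicate L (replicate K x))"
  by (induction L) (simp_all add: replicate_add)

definition proj4 :: "('a \<times> 'b \<times> 'c \<times> 'd) list \<Rightarrow> 'a list \<times> 'b list \<times> 'c list \<times> 'd list" where
  "proj4 ts = (map fst ts, map (\<lambda>t. fst (snd t)) ts, map (\<lambda>t. fst (snd (snd t))) ts, map (\<lambda>t. snd (snd (snd t))) ts)"

definition concat4 :: "('a list \<times> 'b list \<times> 'c list \<times> 'd list) list \<Rightarrow> 'a list \<times> 'b list \<times> 'c list \<times> 'd list" where
  "concat4 bs = (concat (map (\<lambda>b. fst b) bs), concat (map (\<lambda>b. fst (snd b)) bs),
                   concat (map (\<lambda>b. fst (snd (snd b))) bs), concat (map (\<lambda>b. snd (snd (snd b))) bs))"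

lemma iid_UXYZ_proj: "iid_UXYZ q W m = map_pmf proj4 (seq_pmf (replicate m (q_UXYZ q W)))"
  by (simp add: iid_UXYZ_def proj4_def[abs_def])

lemma block_concat4: "block q W n \<delta> L = map_pmf concat4 (seq_pmf (replicate L (subblock q W n \<delta>)))"
  by (simp add: block_def concat4_def[abs_def])

lemma proj4_concat: "proj4 (concat bss) = concat4 (map proj4 bss)"
  by (simp add: proj4_def concat4_def map_concat o_def)

lemma iid_block: "iid_UXYZ q W (K * L) = map_pmf concat4 (seq_pmf (replicate L (iid_UXYZ q W K)))"
proof -
  have "iid_UXYZ q W (K * L) = map_pmf proj4 (map_pmf concat (seq_pmf (replicate L (seq_pmf (replicate K (q_UXYZ q W))))))"
    by (simp add: iid_UXYZ_proj replicate_mult seq_concat)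
  also have "\<dots> = map_pmf concat4 (map_pmf (map proj4) (seq_pmf (replicate L (seq_pmf (replicate K (q_UXYZ q W))))))"
    by (simp add: map_pmf_comp proj4_concat)
  also have "\<dots> = map_pmf concat4 (seq_pmf (map (map_pmf proj4) (replicate L (seq_pmf (replicate K (q_UXYZ q W))))))"
    by (simp only: seq_map)
  also have "\<dots> = map_pmf concat4 (seq_pmf (replicate L (iid_UXYZ q W K)))"
    by (simp add: iid_UXYZ_proj)
  finally show ?thesis .
qed

lemma R1: "map_pmf proj4 (seq_pmf (replicate m (q_UXYZ q W))) =
  bind_pmf (seq_pmf (replicate m q)) (\<lambda>ps. map_pmf (\<lambda>yz. (map fst ps, map snd ps, map fst yz, map snd yz)) (seq_pmf (map W (map snd ps))))"
proof (induction m)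
  case 0
  then show ?case by (simp add: proj4_def bind_return_pmf)
next
  case (Suc m)
  let ?c4 = "\<lambda>t T. (fst t # fst T, fst (snd t) # fst (snd T), fst (snd (snd t)) # fst (snd (snd T)), snd (snd (snd t)) # snd (snd (snd T)))"
  have "map_pmf proj4 (seq_pmf (replicate (Suc m) (q_UXYZ q W))) =
     bind_pmf q (\<lambda>p. bind_pmf (W (snd p)) (\<lambda>yz0. map_pmf (?c4 (fst p, snd p, fst yz0, snd yz0)) (map_pmf proj4 (seq_pmf (replicate m (q_UXYZ q W))))))"
    by (simp add: q_UXYZ_def map_bind_pmf bind_map_pmf bind_assoc_pmf map_pmf_comp split_def proj4_def)
  also have "\<dots> = bind_pmf q (\<lambda>p. bind_pmf (W (snd p)) (\<lambda>yz0. map_pmf (?c4 (fst p, snd p, fst yz0, snd yz0))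
       (bind_pmf (seq_pmf (replicate m q)) (\<lambda>ps. map_pmf (\<lambda>yz. (map fst ps, map snd ps, map fst yz, map snd yz)) (seq_pmf (map W (map snd ps)))))))"
    by (simp only: Suc.IH)
  also have "\<dots> = bind_pmf q (\<lambda>p. bind_pmf (seq_pmf (replicate m q)) (\<lambda>ps. bind_pmf (W (snd p)) (\<lambda>yz0. 
       map_pmf (\<lambda>yz. (fst p # map fst ps, snd p # map snd ps, fst yz0 # map fst yz, snd yz0 # map snd yz)) (seq_pmf (map W (map snd ps))))))"
    by (subst bind_commute_pmf) (simp add: map_bind_pmf map_pmf_comp)
  also have "\<dots> = bind_pmf (seq_pmf (replicate (Suc m) q)) (\<lambda>ps. map_pmf (\<lambda>yz. (map fst ps, map snd ps, map fst yz, map snd yz)) (seq_pmf (map W (map snd ps))))"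
    by (simp add: map_bind_pmf bind_map_pmf bind_assoc_pmf map_pmf_comp)
  finally show ?case .
qed

lemma iid_UXYZ_bind: "iid_UXYZ q W m = bind_pmf (iid_UX q m) (\<lambda>c. map_pmf (\<lambda>yz. (fst c, snd c, map fst yz, map snd yz)) (seq_pmf (map W (snd c))))"
  by (simp add: iid_UXYZ_proj R1 iid_UX_def bind_map_pmf)


definition SBg :: "nat \<Rightarrow> (bool \<Rightarrow> ('y \<times> 'z) pmf) \<Rightarrow> (nat \<Rightarrow> bool list \<Rightarrow> bool pmf) \<Rightarrow> (bool list \<Rightarrow> nat \<Rightarrow> bool list \<Rightarrow> bool pmf)
    \<Rightarrow> (bool list \<times> bool list \<times> 'y list \<times> 'z list) pmf" where
  "SBg n W f g = bind_pmf (succ_gen (2^n) f) (\<lambda>a. bind_pmf (succ_gen (2^n) (g (polar n a)))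
     (\<lambda>v. map_pmf (\<lambda>yz. (polar n a, polar n v, map fst yz, map snd yz)) (seq_pmf (map W (polar n v)))))"

definition Inner :: "nat \<Rightarrow> (bool \<Rightarrow> ('y \<times> 'z) pmf) \<Rightarrow> (nat \<Rightarrow> bool list \<Rightarrow> bool pmf) \<Rightarrow> (bool list \<times> 'y list \<times> 'z list) pmf" where
  "Inner n W g = bind_pmf (succ_gen (2^n) g) (\<lambda>v. map_pmf (\<lambda>yz. (polar n v, map fst yz, map snd yz)) (seq_pmf (map W (polar n v))))"

lemma SBg_alt: "SBg n W f g = bind_pmf (succ_gen (2^n) f) (\<lambda>a. map_pmf (\<lambda>t. (polar n a, t)) (Inner n W (g (polar n a))))"
  by (simp add: SBg_def Inner_def map_bind_pmf map_pmf_comp)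

lemma finite_W: "finite (set_pmf (W x :: ('y::finite \<times> 'z::finite) pmf))"
  by (rule finite_subset[OF subset_UNIV]) simp

lemma kl_Inner:
  fixes W :: "bool \<Rightarrow> ('y::finite \<times> 'z::finite) pmf"
  assumes sub: "\<And>i w. set_pmf (g1 i w) \<subseteq> set_pmf (g2 i w)"
  shows "good (Inner n W g1) (Inner n W g2) \<and> kl (Inner n W g1) (Inner n W g2) = kl (succ_gen (2^n) g1) (succ_gen (2^n) g2)"
proof -
  have g: "good (succ_gen (2^n) g1) (succ_gen (2^n) g2)" using succ_gen_kl[of g1 g2 "2^n", OF sub] by (rule conjunct1)
  have gf: "\<forall>a\<in>set_pmf (succ_gen (2^n) g1). good (seq_pmf (map W (polar n a))) (seq_pmf (map W (polar n a)))"
    by (auto intro!: good_self finite_seq simp: finite_W)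
  have inj: "inj_on (case_prod (\<lambda>v yz. (polar n v, map fst yz, map snd yz)))
      (Sigma (set_pmf (succ_gen (2^n) g2)) (\<lambda>v. set_pmf (seq_pmf (map W (polar n v)))))"
  proof (rule inj_onI)
    fix x y
    assume x: "x \<in> Sigma (set_pmf (succ_gen (2^n) g2)) (\<lambda>v. set_pmf (seq_pmf (map W (polar n v))))"
      and y: "y \<in> Sigma (set_pmf (succ_gen (2^n) g2)) (\<lambda>v. set_pmf (seq_pmf (map W (polar n v))))"
      and e: "case_prod (\<lambda>v yz. (polar n v, map fst yz, map snd yz)) x = case_prod (\<lambda>v yz. (polar n v, map fst yz, map snd yz)) y"
    obtain v yz where xx: "x = (v, yz)" by (cases x)
    obtain v' yz' where yy: "y = (v', yz')" by (cases y)
    have v: "v \<in> set_pmf (succ_gen (2^n) g2)" and v': "v' \<in> set_pmf (succ_gen (2^n) g2)" using x y xx yy by auto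
    have e': "polar n v = polar n v'" "map fst yz = map fst yz'" "map snd yz = map snd yz'" using e xx yy by auto
    have "v = v'" using polar_inj[OF set_succ_gen_length[OF v] set_succ_gen_length[OF v'] e'(1)] .
    moreover have "yz = yz'" by (metis e'(2) e'(3) zip_map_fst_snd)
    ultimately show "x = y" using xx yy by simp
  qed
  show ?thesis
    using kl_chain_inj[OF g gf inj] by (simp add: Inner_def kl_self)
qed

lemma kl_SBg:
  fixes W :: "bool \<Rightarrow> ('y::finite \<times> 'z::finite) pmf"
  assumes subf: "\<And>i w. set_pmf (f1 i w) \<subseteq> set_pmf (f2 i w)"
    and subg: "\<And>u i w. set_pmf (g1 u i w) \<subseteq> set_pmf (g2 u i w)"
  shows "good (SBg n W f1 g1) (SBg n W f2 g2) \<and> kl (SBg n W f1 g1) (SBg n W f2 g2) =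
     kl (succ_gen (2^n) f1) (succ_gen (2^n) f2) + (\<Sum>a\<in>set_pmf (succ_gen (2^n) f1). pmf (succ_gen (2^n) f1) a *
        kl (succ_gen (2^n) (g1 (polar n a))) (succ_gen (2^n) (g2 (polar n a))))"
proof -
  have g: "good (succ_gen (2^n) f1) (succ_gen (2^n) f2)" using succ_gen_kl[of f1 f2 "2^n", OF subf] by (rule conjunct1)
  have KI: "good (Inner n W (g1 u)) (Inner n W (g2 u)) \<and> kl (Inner n W (g1 u)) (Inner n W (g2 u)) = kl (succ_gen (2^n) (g1 u)) (succ_gen (2^n) (g2 u))" for u
    by (rule kl_Inner) (rule subg)
  have gf: "\<forall>a\<in>set_pmf (succ_gen (2^n) f1). good (Inner n W (g1 (polar n a))) (Inner n W (g2 (polar n a)))"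
    using KI by blast
  have inj: "inj_on (case_prod (\<lambda>a t. (polar n a, t)))
      (Sigma (set_pmf (succ_gen (2^n) f2)) (\<lambda>a. set_pmf (Inner n W (g2 (polar n a)))))"
  proof (rule inj_onI)
    fix x y
    assume x: "x \<in> Sigma (set_pmf (succ_gen (2^n) f2)) (\<lambda>a. set_pmf (Inner n W (g2 (polar n a))))"
      and y: "y \<in> Sigma (set_pmf (succ_gen (2^n) f2)) (\<lambda>a. set_pmf (Inner n W (g2 (polar n a))))"
      and e: "case_prod (\<lambda>a t. (polar n a, t)) x = case_prod (\<lambda>a t. (polar n a, t)) y"
    obtain a t where xx: "x = (a, t)" by (cases x)
    obtain a' t' where yy: "y = (a', t')" by (cases y)
    have a: "a \<in> set_pmf (succ_gen (2^n) f2)" and a': "a' \<in> set_pmf (succ_gen (2^n) f2)" using x y xx yy by auto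
    have e': "polar n a = polar n a'" "t = t'" using e xx yy by auto
    have "a = a'" using polar_inj[OF set_succ_gen_length[OF a] set_succ_gen_length[OF a'] e'(1)] .
    then show "x = y" using xx yy e'(2) by simp
  qed
  have "(\<Sum>a\<in>set_pmf (succ_gen (2^n) f1). pmf (succ_gen (2^n) f1) a * kl (Inner n W (g1 (polar n a))) (Inner n W (g2 (polar n a))))
      = (\<Sum>a\<in>set_pmf (succ_gen (2^n) f1). pmf (succ_gen (2^n) f1) a * kl (succ_gen (2^n) (g1 (polar n a))) (succ_gen (2^n) (g2 (polar n a))))"
    using KI by simp
  then show ?thesis
    using kl_chain_inj[OF g gf inj] unfolding SBg_alt by simp
qed

lemma iid_UX_finite: "finite (set_pmf (iid_UX q m))"
proof -
  have fq: "finite (set_pmf q)" by (rule finite_subset[of _ UNIV]) simp_all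
  have "finite (set_pmf (seq_pmf (replicate m q)))" by (rule finite_seq) (use fq in simp)
  then show ?thesis unfolding iid_UX_def by simp
qed

lemma iid_UX_len: "c \<in> set_pmf (iid_UX q m) \<Longrightarrow> length (fst c) = m \<and> length (snd c) = m"
  unfolding iid_UX_def by (auto dest: set_seq_length)

lemma disint_full:
  assumes "\<forall>c\<in>set_pmf P. length (\<phi> c) = K" "k \<in> \<psi> ` set_pmf P"
  shows "map_pmf \<phi> (cond_pmf P {c. \<psi> c = k}) = succ_gen K (cq P \<phi> \<psi> k)"
proof -
  have ne: "set_pmf P \<inter> {c. \<psi> c = k} \<noteq> {}" using assms(2) by auto
  have "map_pmf \<phi> (cond_pmf P {c. \<psi> c = k}) = map_pmf (\<lambda>c. take K (\<phi> c)) (cond_pmf P {c. \<psi> c = k})"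
  proof (rule map_pmf_cong[OF refl])
    fix c assume "c \<in> set_pmf (cond_pmf P {c. \<psi> c = k})"
    hence "c \<in> set_pmf P" using ne by simp
    thus "\<phi> c = take K (\<phi> c)" using assms(1) by simp
  qed
  also have "\<dots> = succ_gen K (cq P \<phi> \<psi> k)" by (rule disint[OF assms le_refl])
  finally show ?thesis .
qed


lemma QK:
  fixes W :: "bool \<Rightarrow> ('y \<times> 'z) pmf"
  shows "iid_UXYZ q W (2^n) = SBg n W (cq (iid_UX q (2^n)) (\<lambda>c. polar n (fst c)) (\<lambda>_. ()) ())
            (\<lambda>u. cq (iid_UX q (2^n)) (\<lambda>c. polar n (snd c)) fst u)"
proof -
  define P where "P = iid_UX q (2^n)"
  define K where "K = (2::nat)^n"
  define Y where "Y (u::bool list) (x::bool list) = map_pmf (\<lambda>yz. (u, x, map fst yz, map snd yz)) (seq_pmf (map W x))" for u x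
  have len: "\<And>c. c \<in> set_pmf P \<Longrightarrow> length (fst c) = K \<and> length (snd c) = K"
    using iid_UX_len unfolding P_def K_def by blast
  have M: "map_pmf (\<lambda>c. polar n (fst c)) P = succ_gen K (cq P (\<lambda>c. polar n (fst c)) (\<lambda>_. ()) ())"
  proof -
    have l1: "\<forall>c\<in>set_pmf P. length (polar n (fst c)) = K" by (simp add: K_def)
    have l2: "() \<in> (\<lambda>_. ()) ` set_pmf P" using set_pmf_not_empty[of P] by blast
    have "map_pmf (\<lambda>c. polar n (fst c)) (cond_pmf P {c. (\<lambda>_. ()) c = ()}) = succ_gen K (cq P (\<lambda>c. polar n (fst c)) (\<lambda>_. ()) ())"
      by (rule disint_full[OF l1 l2])
    moreover have "{c. (\<lambda>_. ()) c = ()} = (UNIV :: (bool list \<times> bool list) set)" by simp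
    ultimately show ?thesis by (simp only: cond_pmf_UNIV)
  qed
  have "iid_UXYZ q W (2^n) = bind_pmf P (\<lambda>c. Y (fst c) (snd c))"
    by (simp add: iid_UXYZ_bind P_def Y_def)
  also have "\<dots> = bind_pmf (bind_pmf (map_pmf fst P) (\<lambda>u. cond_pmf P {c. fst c = u})) (\<lambda>c. Y (fst c) (snd c))"
    by (simp only: disint_bind)
  also have "\<dots> = bind_pmf (map_pmf fst P) (\<lambda>u. bind_pmf (cond_pmf P {c. fst c = u}) (\<lambda>c. Y (fst c) (snd c)))"
    by (rule bind_assoc_pmf)
  also have "\<dots> = bind_pmf (map_pmf fst P) (\<lambda>u. bind_pmf (succ_gen K (cq P (\<lambda>c. polar n (snd c)) fst u)) (\<lambda>v. Y u (polar n v)))"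
  proof (rule bind_pmf_cong[OF refl])
    fix u assume u: "u \<in> set_pmf (map_pmf fst P)"
    have ne: "set_pmf P \<inter> {c. fst c = u} \<noteq> {}" using u by auto
    have A1: "bind_pmf (cond_pmf P {c. fst c = u}) (\<lambda>c. Y (fst c) (snd c)) = bind_pmf (cond_pmf P {c. fst c = u}) (\<lambda>c. Y u (polar n (polar n (snd c))))"
    proof (rule bind_pmf_cong[OF refl])
      fix c assume "c \<in> set_pmf (cond_pmf P {c. fst c = u})"
      hence c: "c \<in> set_pmf P" "fst c = u" using ne by auto
      show "Y (fst c) (snd c) = Y u (polar n (polar n (snd c)))"
        using len[OF c(1)] c(2) by (simp add: polar_polar K_def)
    qed
    have A2: "map_pmf (\<lambda>c. polar n (snd c)) (cond_pmf P {c. fst c = u}) = succ_gen K (cq P (\<lambda>c. polar n (snd c)) fst u)"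
      by (rule disint_full) (use u in \<open>auto simp: K_def\<close>)
    show "bind_pmf (cond_pmf P {c. fst c = u}) (\<lambda>c. Y (fst c) (snd c)) = bind_pmf (succ_gen K (cq P (\<lambda>c. polar n (snd c)) fst u)) (\<lambda>v. Y u (polar n v))"
      unfolding A1 A2[symmetric] by (simp add: bind_map_pmf)
  qed
  also have "\<dots> = bind_pmf (map_pmf (\<lambda>c. polar n (fst c)) P) (\<lambda>a. bind_pmf (succ_gen K (cq P (\<lambda>c. polar n (snd c)) fst (polar n a))) (\<lambda>v. Y (polar n a) (polar n v)))"
    unfolding bind_map_pmf by (rule bind_pmf_cong[OF refl]) (use len in \<open>auto simp: polar_polar K_def\<close>)
  also have "\<dots> = bind_pmf (succ_gen K (cq P (\<lambda>c. polar n (fst c)) (\<lambda>_. ()) ())) (\<lambda>a. bind_pmf (succ_gen K (cq P (\<lambda>c. polar n (snd c)) fst (polar n a))) (\<lambda>v. Y (polar n a) (polar n v)))"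
    by (simp only: M)
  finally show ?thesis by (simp only: SBg_def Y_def K_def P_def)
qed
lemma SB_eq:
  "subblock q W n \<delta> = SBg n W (cp (iid_UX q (2^n)) (\<lambda>c. polar n (fst c)) (\<lambda>_. ()) (V_U q n \<delta>) ())
            (\<lambda>u. cp (iid_UX q (2^n)) (\<lambda>c. polar n (snd c)) fst (V_XU q n \<delta>) u)"
proof -
  define P where "P = iid_UX q (2^n)"
  have fA: "(\<lambda>j w. if j \<in> V_U q n \<delta> then coin else cond_on P (\<lambda>(u', x'). polar n u' ! j) {(u', x'). take j (polar n u') = w})
     = cp P (\<lambda>c. polar n (fst c)) (\<lambda>_. ()) (V_U q n \<delta>) ()"
  proof (intro ext)
    fix j w
    have e1: "(\<lambda>(u', x'). polar n u' ! j) = (\<lambda>c. polar n (fst c) ! j)" by auto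
    have e2: "{(u', x'). take j (polar n u') = w} = {c. take j (polar n (fst c)) = w \<and> () = ()}" by auto
    show "(if j \<in> V_U q n \<delta> then coin else cond_on P (\<lambda>(u', x'). polar n u' ! j) {(u', x'). take j (polar n u') = w})
       = cp P (\<lambda>c. polar n (fst c)) (\<lambda>_. ()) (V_U q n \<delta>) () j w"
      unfolding cp_def cq_def e1 e2 ..
  qed
  have fV: "(\<lambda>j w. if j \<in> V_XU q n \<delta> then coin else cond_on P (\<lambda>(u', x'). polar n x' ! j) {(u', x'). take j (polar n x') = w \<and> u' = u})
     = cp P (\<lambda>c. polar n (snd c)) fst (V_XU q n \<delta>) u" for u
  proof (intro ext)
    fix j w
    have e1: "(\<lambda>(u', x'). polar n x' ! j) = (\<lambda>c. polar n (snd c) ! j)" by auto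
    have e2: "{(u', x'). take j (polar n x') = w \<and> u' = u} = {c. take j (polar n (snd c)) = w \<and> fst c = u}" by auto
    show "(if j \<in> V_XU q n \<delta> then coin else cond_on P (\<lambda>(u', x'). polar n x' ! j) {(u', x'). take j (polar n x') = w \<and> u' = u})
       = cp P (\<lambda>c. polar n (snd c)) fst (V_XU q n \<delta>) u j w"
      unfolding cp_def cq_def e1 e2 ..
  qed
  show ?thesis
    unfolding subblock_def SBg_def Let_def P_def[symmetric] fA fV ..
qed

lemma cond_ent_unit: "cond_ent (map_pmf (\<lambda>x. (fst x, (snd x, ()))) J) = cond_ent J"
proof -
  define g where "g = (\<lambda>x::'a \<times> 'b. (fst x, (snd x, ())))"
  have ig: "inj g" by (auto simp: inj_on_def g_def)
  have ih: "inj (\<lambda>b::'b. (b, ()))" by (auto simp: inj_on_def)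
  have ms: "map_pmf snd (map_pmf g J) = map_pmf (\<lambda>b. (b, ())) (map_pmf snd J)"
    by (simp add: map_pmf_comp g_def)
  have "cond_ent (map_pmf g J) = - (\<Sum>x\<in>g ` set_pmf J. pmf (map_pmf g J) x * log 2 (pmf (map_pmf g J) x / pmf (map_pmf snd (map_pmf g J)) (snd x)))"
    by (simp add: cond_ent_def)
  also have "\<dots> = - (\<Sum>x\<in>set_pmf J. pmf (map_pmf g J) (g x) * log 2 (pmf (map_pmf g J) (g x) / pmf (map_pmf snd (map_pmf g J)) (snd (g x))))"
    using sum.reindex[OF inj_on_subset[OF ig subset_UNIV], of "\<lambda>x. pmf (map_pmf g J) x * log 2 (pmf (map_pmf g J) x / pmf (map_pmf snd (map_pmf g J)) (snd x))" "set_pmf J"]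
    by simp
  also have "\<dots> = cond_ent J"
  proof -
    have "pmf (map_pmf g J) (g x) = pmf J x" for x by (rule pmf_map_inj'[OF ig])
    moreover have "pmf (map_pmf snd (map_pmf g J)) (snd (g x)) = pmf (map_pmf snd J) (snd x)" for x
      unfolding ms by (simp add: g_def pmf_map_inj'[OF ih])
    ultimately show ?thesis by (simp add: cond_ent_def)
  qed
  finally show ?thesis by (simp add: g_def)
qed

lemma reindex_polar:
  assumes fin: "finite (set_pmf P)" and len: "\<forall>c\<in>set_pmf P. length (fst c) = 2^n"
  shows "(\<Sum>a\<in>set_pmf (map_pmf (\<lambda>c. polar n (fst c)) P). pmf (map_pmf (\<lambda>c. polar n (fst c)) P) a * G (polar n a))
       = (\<Sum>u\<in>set_pmf (map_pmf fst P). pmf (map_pmf fst P) u * G u)"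
proof -
  have "(\<Sum>a\<in>set_pmf (map_pmf (\<lambda>c. polar n (fst c)) P). pmf (map_pmf (\<lambda>c. polar n (fst c)) P) a * G (polar n a))
      = measure_pmf.expectation (map_pmf (\<lambda>c. polar n (fst c)) P) (\<lambda>a. G (polar n a))"
    by (rule exp_sum[symmetric]) (simp add: fin)
  also have "\<dots> = measure_pmf.expectation P (\<lambda>c. G (polar n (polar n (fst c))))" by simp
  also have "\<dots> = measure_pmf.expectation P (\<lambda>c. G (fst c))"
    by (rule exp_cong[OF fin]) (use len in \<open>simp add: polar_polar\<close>)
  also have "\<dots> = measure_pmf.expectation (map_pmf fst P) G" by simp
  also have "\<dots> = (\<Sum>u\<in>set_pmf (map_pmf fst P). pmf (map_pmf fst P) u * G u)"
    by (rule exp_sum) (simp add: fin)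
  finally show ?thesis .
qed


lemma concat_map_inj:
  "length bs = length bs' \<Longrightarrow> (\<forall>b\<in>set bs. length (f b) = K) \<Longrightarrow> (\<forall>b\<in>set bs'. length (f b) = K) \<Longrightarrow>
   concat (map f bs) = concat (map f bs') \<Longrightarrow> map f bs = map f bs'"
proof (induction bs arbitrary: bs')
  case Nil
  then show ?case by simp
next
  case (Cons b bs)
  then obtain b' bs'' where bs': "bs' = b' # bs''" by (cases bs') auto
  have e: "f b @ concat (map f bs) = f b' @ concat (map f bs'')" using Cons.prems bs' by simp
  have "length (f b) = length (f b')" using Cons.prems bs' by simp
  with e have "f b = f b'" "concat (map f bs) = concat (map f bs'')" by (simp_all add: append_eq_append_conv)
  moreover have "map f bs = map f bs''" using Cons.IH[of bs''] Cons.prems bs' \<open>concat (map f bs) = concat (map f bs'')\<close> by simp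
  ultimately show ?case using bs' by simp
qed

lemma set_seq_rep: "xs \<in> set_pmf (seq_pmf (replicate L M)) \<Longrightarrow> x \<in> set xs \<Longrightarrow> x \<in> set_pmf M"
  by (induction L arbitrary: xs) auto

lemma inj_concat4:
  assumes len: "\<forall>x\<in>set_pmf M. length (fst x) = K \<and> length (fst (snd x)) = K \<and> length (fst (snd (snd x))) = K \<and> length (snd (snd (snd x))) = K"
  shows "inj_on concat4 (set_pmf (seq_pmf (replicate L M)))"
proof (rule inj_onI)
  fix bs bs' assume bs: "bs \<in> set_pmf (seq_pmf (replicate L M))" and bs': "bs' \<in> set_pmf (seq_pmf (replicate L M))"
    and e: "concat4 bs = concat4 bs'"
  have l: "length bs = L" "length bs' = L" using set_seq_length[OF bs] set_seq_length[OF bs'] by simp_all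
  have m1: "\<forall>b\<in>set bs. b \<in> set_pmf M" using set_seq_rep[OF bs] by blast
  have m2: "\<forall>b\<in>set bs'. b \<in> set_pmf M" using set_seq_rep[OF bs'] by blast
  note m = m1 m2
  have e1: "map fst bs = map fst bs'"
    by (rule concat_map_inj[where K=K]) (use l m len e in \<open>auto simp: concat4_def\<close>)
  have e2: "map (\<lambda>b. fst (snd b)) bs = map (\<lambda>b. fst (snd b)) bs'"
    by (rule concat_map_inj[where K=K]) (use l m len e in \<open>auto simp: concat4_def\<close>)
  have e3: "map (\<lambda>b. fst (snd (snd b))) bs = map (\<lambda>b. fst (snd (snd b))) bs'"
    by (rule concat_map_inj[where K=K]) (use l m len e in \<open>auto simp: concat4_def\<close>)
  have e4: "map (\<lambda>b. snd (snd (snd b))) bs = map (\<lambda>b. snd (snd (snd b))) bs'"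
    by (rule concat_map_inj[where K=K]) (use l m len e in \<open>auto simp: concat4_def\<close>)
  show "bs = bs'"
  proof (rule nth_equalityI)
    show "length bs = length bs'" using l by simp
    fix i assume i: "i < length bs"
    have "map fst bs ! i = map fst bs' ! i" "map (\<lambda>b. fst (snd b)) bs ! i = map (\<lambda>b. fst (snd b)) bs' ! i"
      "map (\<lambda>b. fst (snd (snd b))) bs ! i = map (\<lambda>b. fst (snd (snd b))) bs' ! i"
      "map (\<lambda>b. snd (snd (snd b))) bs ! i = map (\<lambda>b. snd (snd (snd b))) bs' ! i"
      using e1 e2 e3 e4 by simp_all
    then show "bs ! i = bs' ! i" using i l by (simp add: prod_eq_iff)
  qed
qed

lemma set_SBg_len:
  "x \<in> set_pmf (SBg n W f g) \<Longrightarrow> length (fst x) = 2^n \<and> length (fst (snd x)) = 2^n \<and>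
     length (fst (snd (snd x))) = 2^n \<and> length (snd (snd (snd x))) = 2^n"
  unfolding SBg_def by (auto dest!: set_seq_length)

lemma succ_map_A:
  assumes "K = (2::nat)^n"
  shows "succ_gen K (cq P (\<lambda>c. polar n (fst c)) (\<lambda>_. ()) ()) = map_pmf (\<lambda>c. polar n (fst c)) P"
proof -
  have l1: "\<forall>c\<in>set_pmf P. length (polar n (fst c)) = K" by (simp add: assms)
  have l2: "() \<in> (\<lambda>_. ()) ` set_pmf P" using set_pmf_not_empty[of P] by blast
  have "map_pmf (\<lambda>c. polar n (fst c)) (cond_pmf P {c. (\<lambda>_. ()) c = ()}) = succ_gen K (cq P (\<lambda>c. polar n (fst c)) (\<lambda>_. ()) ())"
    by (rule disint_full[OF l1 l2])
  moreover have "cond_pmf P {c. (\<lambda>_. ()) c = ()} = P" by (simp add: cond_pmf_UNIV)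
  ultimately show ?thesis by simp
qed

theorem lemma2:
  fixes q :: "(bool \<times> bool) pmf"
    and W :: "bool \<Rightarrow> ('y::finite \<times> 'z::finite) pmf"
    and n L :: nat and \<beta> :: real
  assumes "0 < \<beta>" and "\<beta> < 1/2"
  defines "K \<equiv> (2::nat) ^ n"
  defines "N \<equiv> K * L"
  defines "\<delta> \<equiv> 2 powr (- (real K powr \<beta>))"
  shows "KL (iid_UXYZ q W N) (block q W n \<delta> L) \<le> ereal (2 * real L * real K * \<delta>)"
proof -
  define P where "P = iid_UX q K"
  define \<phi>A where "\<phi>A = (\<lambda>c::bool list \<times> bool list. polar n (fst c))"
  define \<phi>V where "\<phi>V = (\<lambda>c::bool list \<times> bool list. polar n (snd c))"
  define fq where "fq = cq P \<phi>A (\<lambda>_. ()) ()"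
  define fp where "fp = cp P \<phi>A (\<lambda>_. ()) (V_U q n \<delta>) ()"
  define gq where "gq = (\<lambda>u. cq P \<phi>V fst u)"
  define gp where "gp = (\<lambda>u. cp P \<phi>V fst (V_XU q n \<delta>) u)"
  have d: "\<delta> \<ge> 0" by (simp add: \<delta>_def)
  have fin: "finite (set_pmf P)" by (simp add: P_def iid_UX_finite)
  have lenP: "\<forall>c\<in>set_pmf P. length (fst c) = 2^n" using iid_UX_len unfolding P_def K_def by blast
  have lenA: "\<forall>c\<in>set_pmf P. length (\<phi>A c) = K" by (simp add: \<phi>A_def K_def)
  have lenV: "\<forall>c\<in>set_pmf P. length (\<phi>V c) = K" by (simp add: \<phi>V_def K_def)
  have QKe: "iid_UXYZ q W K = SBg n W fq gq"
    unfolding K_def fq_def gq_def P_def \<phi>A_def \<phi>V_def K_def by (rule QK)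
  have SBe: "subblock q W n \<delta> = SBg n W fp gp"
    unfolding fp_def gp_def P_def \<phi>A_def \<phi>V_def K_def by (rule SB_eq)
  have KS: "good (SBg n W fq gq) (SBg n W fp gp) \<and> kl (SBg n W fq gq) (SBg n W fp gp) =
     kl (succ_gen (2^n) fq) (succ_gen (2^n) fp) + (\<Sum>a\<in>set_pmf (succ_gen (2^n) fq). pmf (succ_gen (2^n) fq) a *
        kl (succ_gen (2^n) (gq (polar n a))) (succ_gen (2^n) (gp (polar n a))))"
    by (rule kl_SBg) (simp_all add: fq_def fp_def gq_def gp_def set_cq_cp)
  have HA: "\<forall>i\<in>V_U q n \<delta>. cond_ent (map_pmf (\<lambda>c. (\<phi>A c ! i, (take i (\<phi>A c), (\<lambda>_. ()) c))) P) > 1 - \<delta>"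
  proof
    fix i assume i: "i \<in> V_U q n \<delta>"
    have "map_pmf (\<lambda>c. (\<phi>A c ! i, (take i (\<phi>A c), (\<lambda>_. ()) c))) P
        = map_pmf (\<lambda>x. (fst x, (snd x, ()))) (map_pmf (\<lambda>(u, x). (polar n u ! i, take i (polar n u))) P)"
      by (simp add: map_pmf_comp \<phi>A_def split_def)
    hence "cond_ent (map_pmf (\<lambda>c. (\<phi>A c ! i, (take i (\<phi>A c), (\<lambda>_. ()) c))) P) = H_A q n i"
      by (simp add: cond_ent_unit H_A_def P_def K_def)
    then show "cond_ent (map_pmf (\<lambda>c. (\<phi>A c ! i, (take i (\<phi>A c), (\<lambda>_. ()) c))) P) > 1 - \<delta>"
      using i by (simp add: V_U_def)
  qed
  have SA: "V_U q n \<delta> \<subseteq> {..<K}" by (auto simp: V_U_def K_def)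
  note GA0 = GL[OF fin lenA SA HA d]
  have GA: "kl (succ_gen (2^n) fq) (succ_gen (2^n) fp) \<le> real K * \<delta>"
    using GA0 by (simp add: fq_def fp_def K_def)
  have HV: "\<forall>i\<in>V_XU q n \<delta>. cond_ent (map_pmf (\<lambda>c. (\<phi>V c ! i, (take i (\<phi>V c), fst c))) P) > 1 - \<delta>"
  proof
    fix i assume i: "i \<in> V_XU q n \<delta>"
    have "map_pmf (\<lambda>c. (\<phi>V c ! i, (take i (\<phi>V c), fst c))) P = map_pmf (\<lambda>(u, x). (polar n x ! i, (take i (polar n x), u))) P"
      by (simp add: \<phi>V_def split_def)
    hence "cond_ent (map_pmf (\<lambda>c. (\<phi>V c ! i, (take i (\<phi>V c), fst c))) P) = H_V q n i"
      by (simp add: H_V_def P_def K_def)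
    then show "cond_ent (map_pmf (\<lambda>c. (\<phi>V c ! i, (take i (\<phi>V c), fst c))) P) > 1 - \<delta>"
      using i by (simp add: V_XU_def)
  qed
  have SV: "V_XU q n \<delta> \<subseteq> {..<K}" by (auto simp: V_XU_def K_def)
  have GV: "(\<Sum>u\<in>set_pmf (map_pmf fst P). pmf (map_pmf fst P) u * kl (succ_gen K (gq u)) (succ_gen K (gp u))) \<le> real K * \<delta>"
    using GL[OF fin lenV SV HV d] by (simp add: gq_def gp_def)
  have RI: "(\<Sum>a\<in>set_pmf (succ_gen (2^n) fq). pmf (succ_gen (2^n) fq) a *
        kl (succ_gen (2^n) (gq (polar n a))) (succ_gen (2^n) (gp (polar n a))))
      = (\<Sum>u\<in>set_pmf (map_pmf fst P). pmf (map_pmf fst P) u * kl (succ_gen K (gq u)) (succ_gen K (gp u)))"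
  proof -
    have "succ_gen (2^n) fq = map_pmf (\<lambda>c. polar n (fst c)) P"
      unfolding fq_def \<phi>A_def by (rule succ_map_A) simp
    then show ?thesis using reindex_polar[OF fin lenP, of "\<lambda>u. kl (succ_gen K (gq u)) (succ_gen K (gp u))"]
      by (simp add: K_def)
  qed
  have goodQ: "good (iid_UXYZ q W K) (subblock q W n \<delta>)" using KS QKe SBe by simp
  have klQ: "kl (iid_UXYZ q W K) (subblock q W n \<delta>) \<le> 2 * real K * \<delta>"
    using KS QKe SBe GA GV RI by simp
  have S1: "good (seq_pmf (replicate L (iid_UXYZ q W K))) (seq_pmf (replicate L (subblock q W n \<delta>))) \<and>
         kl (seq_pmf (replicate L (iid_UXYZ q W K))) (seq_pmf (replicate L (subblock q W n \<delta>))) = real L * kl (iid_UXYZ q W K) (subblock q W n \<delta>)"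
    by (rule seq_kl_rep[OF goodQ])
  have lenSB: "\<forall>x\<in>set_pmf (subblock q W n \<delta>). length (fst x) = K \<and> length (fst (snd x)) = K \<and> length (fst (snd (snd x))) = K \<and> length (snd (snd (snd x))) = K"
    unfolding SBe K_def using set_SBg_len by blast
  have inj: "inj_on concat4 (set_pmf (seq_pmf (replicate L (subblock q W n \<delta>))))"
    by (rule inj_concat4[OF lenSB])
  note S2 = kl_map_inj[OF inj conjunct1[OF S1]]
  have eq1: "iid_UXYZ q W N = map_pmf concat4 (seq_pmf (replicate L (iid_UXYZ q W K)))"
    unfolding N_def by (rule iid_block)
  have eq2: "block q W n \<delta> L = map_pmf concat4 (seq_pmf (replicate L (subblock q W n \<delta>)))"
    by (rule block_concat4)
  have "KL (iid_UXYZ q W N) (block q W n \<delta> L) = ereal (real L * kl (iid_UXYZ q W K) (subblock q W n \<delta>))"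
    unfolding eq1 eq2 using S1 S2 by (simp add: KL_eq good_def)
  also have "\<dots> \<le> ereal (2 * real L * real K * \<delta>)"
  proof -
    have "real L * kl (iid_UXYZ q W K) (subblock q W n \<delta>) \<le> real L * (2 * real K * \<delta>)"
      using klQ by (intro mult_left_mono) simp_all
    then show ?thesis by (simp add: algebra_simps)
  qed
  finally show ?thesis .
qed


end
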